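(* Let $k\ge 2$ be a constant integer. There is a constant $C>0$ such that for all integers $1\le j\le n$ and all positive integers $q$ the following holds: letting $x$ be the vertex born in round $j$ of the random $k$-tree process, conditional on any realization of $G(j)$, the probability that $x$ has degree greater than $k+q(n/j)^{(k-1)/k}$ in $G(n)$ is at most $C\,q\sqrt{q}\,e^{-q}$.
   Context: Random $k$-tree process: $G(0)$ is a clique on $k$ vertices; for $t\ge1$, $G(t)$ is obtained from $G(t-1)$ by choosing a $k$-clique of $G(t-1)$ uniformly at random, creating a new vertex (said to be born in round $t$), and joining it to all vertices of the chosen clique. *)

theory Defs
  imports "HOL-Probability.Probability"
begin

text \<open>The initial clique G(0) has vertices 0..k-1; the vertex born in round t (t \<ge> 1)
  is the vertex k + t - 1, so G(t) has vertex set {..<k+t}.\<close>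

definition ktree_init :: "nat \<Rightarrow> nat set set" where
  "ktree_init k = {{u, v} | u v. u < k \<and> v < k \<and> u \<noteq> v}"

definition kcliques :: "nat \<Rightarrow> nat set \<Rightarrow> nat set set \<Rightarrow> nat set set" where
  "kcliques k V E = {S. S \<subseteq> V \<and> card S = k \<and> (\<forall>u\<in>S. \<forall>v\<in>S. u \<noteq> v \<longrightarrow> {u, v} \<in> E)}"

definition ktree_step :: "nat \<Rightarrow> nat \<Rightarrow> nat set set \<Rightarrow> nat set set pmf" where
  "ktree_step k t E =
     map_pmf (\<lambda>S. E \<union> {{v, k + t} | v. v \<in> S}) (pmf_of_set (kcliques k {..<k + t} E))"

text \<open>Evolution of the process from state H = G(j) for m further rounds: distribution of G(j+m)
  conditional on G(j) = H.\<close>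
primrec ktree_evolve :: "nat \<Rightarrow> nat \<Rightarrow> nat \<Rightarrow> nat set set \<Rightarrow> nat set set pmf" where
  "ktree_evolve k j 0 H = return_pmf H"
| "ktree_evolve k j (Suc m) H = bind_pmf (ktree_evolve k j m H) (ktree_step k (j + m))"

definition ktree_process :: "nat \<Rightarrow> nat \<Rightarrow> nat set set pmf" where
  "ktree_process k t = ktree_evolve k 0 t (ktree_init k)"

definition degree :: "nat set set \<Rightarrow> nat \<Rightarrow> nat" where
  "degree E x = card {v. {v, x} \<in> E \<and> v \<noteq> x}"

end

theory Submission
  imports Defs
begin

definition newE :: "nat \<Rightarrow> nat set \<Rightarrow> nat set set" where
  "newE w S = {{v, w} | v. v \<in> S}"

lemma ktree_step_alt:
  "ktree_step k t E = map_pmf (\<lambda>S. E \<union> newE (k+t) S) (pmf_of_set (kcliques k {..<k+t} E))"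
  by (simp add: ktree_step_def newE_def)

lemma cliques_step:
  assumes k: "k \<ge> 1" and Ein: "\<forall>e\<in>E. e \<subseteq> {..<k+t}"
    and S: "S \<in> kcliques k {..<k+t} E"
  shows "kcliques k {..<k+Suc t} (E \<union> newE (k+t) S)
         = kcliques k {..<k+t} E \<union> (\<lambda>u. insert (k+t) (S - {u})) ` S"
proof -
  let ?w = "k+t"
  let ?V = "{..<k+t}"
  let ?E' = "E \<union> newE ?w S"
  have SV: "S \<subseteq> ?V" and cS: "card S = k" and cliS: "\<forall>u\<in>S. \<forall>v\<in>S. u \<noteq> v \<longrightarrow> {u, v} \<in> E"
    using S by (auto simp: kcliques_def)
  have finS: "finite S" using cS k by (metis card.infinite not_one_le_zero)
  have wS: "?w \<notin> S" using SV by auto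
  have notE: "{u, ?w} \<notin> E" for u using Ein by fastforce
  have newiff: "{u, ?w} \<in> newE ?w S \<longleftrightarrow> u \<in> S" if "u \<noteq> ?w" for u
    using that by (auto simp: newE_def doubleton_eq_iff)
  show ?thesis
  proof (intro equalityI subsetI)
    fix T assume T: "T \<in> kcliques k {..<k+Suc t} ?E'"
    hence TV: "T \<subseteq> insert ?w ?V" and cT: "card T = k"
      and cliT: "\<forall>u\<in>T. \<forall>v\<in>T. u \<noteq> v \<longrightarrow> {u, v} \<in> ?E'"
      by (auto simp: kcliques_def)
    show "T \<in> kcliques k {..<k+t} E \<union> (\<lambda>u. insert (k+t) (S - {u})) ` S"
    proof (cases "?w \<in> T")
      case False
      hence TV': "T \<subseteq> ?V" using TV by auto
      have "\<forall>u\<in>T. \<forall>v\<in>T. u \<noteq> v \<longrightarrow> {u, v} \<in> E"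
      proof (intro ballI impI)
        fix u v assume uv: "u \<in> T" "v \<in> T" "u \<noteq> v"
        hence "{u,v} \<in> ?E'" using cliT by auto
        moreover have "{u,v} \<notin> newE ?w S" using uv TV' by (auto simp: newE_def doubleton_eq_iff)
        ultimately show "{u,v} \<in> E" by auto
      qed
      thus ?thesis using TV' cT by (auto simp: kcliques_def)
    next
      case True
      have sub: "T - {?w} \<subseteq> S"
      proof
        fix u assume u: "u \<in> T - {?w}"
        hence "{u, ?w} \<in> ?E'" using cliT True by auto
        thus "u \<in> S" using notE newiff u by auto
      qed
      have finT: "finite T" using cT k by (metis card.infinite not_one_le_zero)
      have cT': "card (T - {?w}) = k - 1" using True cT finT by simp
      have "card (S - (T - {?w})) = 1"
        using card_Diff_subset[OF finite_subset[OF sub finS] sub] cT' cS k by simp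
      then obtain u0 where u0: "S - (T - {?w}) = {u0}" by (auto simp: card_Suc_eq)
      hence u0S: "u0 \<in> S" by auto
      have "T - {?w} = S - {u0}" using u0 sub by blast
      hence "T = insert ?w (S - {u0})" using True by blast
      thus ?thesis using u0S by blast
    qed
  next
    fix T assume "T \<in> kcliques k {..<k+t} E \<union> (\<lambda>u. insert (k+t) (S - {u})) ` S"
    then show "T \<in> kcliques k {..<k+Suc t} ?E'"
    proof
      assume "T \<in> kcliques k {..<k+t} E"
      thus ?thesis by (auto simp: kcliques_def)
    next
      assume "T \<in> (\<lambda>u. insert (k+t) (S - {u})) ` S"
      then obtain u where u: "u \<in> S" and Tu: "T = insert ?w (S - {u})" by auto
      have "card T = k" using Tu u wS finS cS k by (simp add: card_Diff_singleton)
      moreover have "T \<subseteq> {..<k+Suc t}" using Tu SV by auto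
      moreover have "\<forall>a\<in>T. \<forall>b\<in>T. a \<noteq> b \<longrightarrow> {a, b} \<in> ?E'"
      proof (intro ballI impI)
        fix a b assume ab: "a \<in> T" "b \<in> T" "a \<noteq> b"
        show "{a,b} \<in> ?E'"
        proof (cases "a = ?w")
          case True thus ?thesis using ab Tu newiff by (auto simp: insert_commute)
        next
          case False
          show ?thesis
          proof (cases "b = ?w")
            case True thus ?thesis using ab Tu newiff False by auto
          next
            case False
            thus ?thesis using ab Tu cliS \<open>a \<noteq> ?w\<close> by auto
          qed
        qed
      qed
      ultimately show ?thesis by (simp add: kcliques_def)
    qed
  qed
qed

definition Bi :: "nat \<Rightarrow> nat \<Rightarrow> nat set set \<Rightarrow> bool" where
  "Bi k t E \<longleftrightarrow> (\<forall>e\<in>E. e \<subseteq> {..<k+t}) \<and> card (kcliques k {..<k+t} E) = 1 + k*t"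

definition Wx :: "nat \<Rightarrow> nat \<Rightarrow> nat \<Rightarrow> nat set set \<Rightarrow> nat" where
  "Wx k t x E = card {S \<in> kcliques k {..<k+t} E. x \<in> S}"

lemma finite_kcliques: "finite (kcliques k {..<m} E)"
  by (rule finite_subset[of _ "Pow {..<m}"]) (auto simp: kcliques_def)

lemma step_facts:
  assumes k: "k \<ge> 2" and B: "Bi k t E"
    and S: "S \<in> kcliques k {..<k+t} E"
  shows "Bi k (Suc t) (E \<union> newE (k+t) S)"
    and "x < k+t \<Longrightarrow> Wx k (Suc t) x (E \<union> newE (k+t) S) = Wx k t x E + (if x \<in> S then k-1 else 0)"
    and "x < k+t \<Longrightarrow> degree (E \<union> newE (k+t) S) x = degree E x + (if x \<in> S then 1 else 0)"
    and "degree (E \<union> newE (k+t) S) (k+t) = k"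
    and "Wx k (Suc t) (k+t) (E \<union> newE (k+t) S) = k"
proof -
  let ?w = "k+t"
  let ?V = "{..<k+t}"
  let ?E' = "E \<union> newE ?w S"
  let ?f = "\<lambda>u. insert (k+t) (S - {u})"
  have Ein: "\<forall>e\<in>E. e \<subseteq> ?V" and cC: "card (kcliques k ?V E) = 1 + k*t" using B by (auto simp: Bi_def)
  have SV: "S \<subseteq> ?V" and cS: "card S = k"
    using S by (auto simp: kcliques_def)
  have finS: "finite S" using cS k by (metis card.infinite not_numeral_le_zero)
  have wS: "?w \<notin> S" using SV by auto
  have notE: "{u, ?w} \<notin> E" for u using Ein by fastforce
  have CE: "kcliques k {..<k+Suc t} ?E' = kcliques k ?V E \<union> ?f ` S"
    by (rule cliques_step) (use k Ein S in auto)
  have inj: "inj_on ?f A" if "A \<subseteq> S" for A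
  proof
    fix u1 u2 assume u: "u1 \<in> A" "u2 \<in> A" "?f u1 = ?f u2"
    hence "S - {u1} = S - {u2}" using wS
      by (metis Diff_insert_absorb Diff_subset subsetD)
    thus "u1 = u2" using u that by blast
  qed
  have oldw: "?w \<notin> T" if "T \<in> kcliques k ?V E" for T using that by (auto simp: kcliques_def)
  have disj: "kcliques k ?V E \<inter> ?f ` S = {}" using oldw by auto
  show "Bi k (Suc t) ?E'"
  proof -
    have "\<forall>e\<in>?E'. e \<subseteq> {..<k+Suc t}" using Ein SV by (fastforce simp: newE_def)
    moreover have "card (kcliques k {..<k+Suc t} ?E') = 1 + k * Suc t"
      unfolding CE using disj cC card_image[OF inj[OF order_refl]] cS finite_kcliques finS
      by (simp add: card_Un_disjoint)
    ultimately show ?thesis by (simp add: Bi_def)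
  qed
  show "Wx k (Suc t) x ?E' = Wx k t x E + (if x \<in> S then k-1 else 0)" if x: "x < k+t"
  proof -
    have "{T \<in> kcliques k {..<k+Suc t} ?E'. x \<in> T} = {T \<in> kcliques k ?V E. x \<in> T} \<union> ?f ` {u \<in> S. u \<noteq> x \<and> x \<in> S}"
      unfolding CE using x by auto
    moreover have "card (?f ` {u \<in> S. u \<noteq> x \<and> x \<in> S}) = (if x \<in> S then k-1 else 0)"
    proof (cases "x \<in> S")
      case True
      have "{u \<in> S. u \<noteq> x \<and> x \<in> S} = S - {x}" using True by auto
      thus ?thesis using True card_image[OF inj[of "S - {x}"]] cS finS by auto
    next
      case False thus ?thesis by simp
    qed
    moreover have "finite {T \<in> kcliques k ?V E. x \<in> T}" using finite_kcliques by auto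
    moreover have "{T \<in> kcliques k ?V E. x \<in> T} \<inter> ?f ` {u \<in> S. u \<noteq> x \<and> x \<in> S} = {}" using disj by auto
    ultimately show ?thesis unfolding Wx_def using finS by (simp add: card_Un_disjoint)
  qed
  show "degree ?E' x = degree E x + (if x \<in> S then 1 else 0)" if x: "x < k+t"
  proof -
    have "{v. {v, x} \<in> ?E' \<and> v \<noteq> x} = {v. {v, x} \<in> E \<and> v \<noteq> x} \<union> (if x \<in> S then {?w} else {})"
      using x by (auto simp: newE_def doubleton_eq_iff)
    moreover have "?w \<notin> {v. {v, x} \<in> E \<and> v \<noteq> x}" using notE by (auto simp: insert_commute)
    moreover have "finite {v. {v, x} \<in> E \<and> v \<noteq> x}"
      by (rule finite_subset[of _ ?V]) (use Ein in auto)
    ultimately show ?thesis unfolding degree_def by auto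
  qed
  show "degree ?E' ?w = k"
  proof -
    have "{v. {v, ?w} \<in> ?E' \<and> v \<noteq> ?w} = S"
      using notE wS by (auto simp: newE_def doubleton_eq_iff)
    thus ?thesis using cS by (simp add: degree_def)
  qed
  show "Wx k (Suc t) ?w ?E' = k"
  proof -
    have "{T \<in> kcliques k {..<k+Suc t} ?E'. ?w \<in> T} = ?f ` S"
      unfolding CE using oldw by auto
    thus ?thesis unfolding Wx_def using card_image[OF inj[OF order_refl]] cS by simp
  qed
qed

lemma Bi_init:
  assumes k: "k \<ge> 2"
  shows "Bi k 0 (ktree_init k)"
proof -
  have "kcliques k {..<k} (ktree_init k) = {{..<k}}"
  proof (intro equalityI subsetI)
    fix S assume "S \<in> kcliques k {..<k} (ktree_init k)"
    hence "S \<subseteq> {..<k}" "card S = k" by (auto simp: kcliques_def)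
    thus "S \<in> {{..<k}}" using card_subset_eq[of "{..<k}" S] by auto
  next
    fix S assume "S \<in> {{..<k}}"
    thus "S \<in> kcliques k {..<k} (ktree_init k)" by (auto simp: kcliques_def ktree_init_def)
  qed
  moreover have "\<forall>e\<in>ktree_init k. e \<subseteq> {..<k}" by (auto simp: ktree_init_def)
  ultimately show ?thesis by (simp add: Bi_def)
qed

lemma set_step:
  assumes "Bi k t E"
  shows "set_pmf (ktree_step k t E) = (\<lambda>S. E \<union> newE (k+t) S) ` kcliques k {..<k+t} E"
proof -
  have "kcliques k {..<k+t} E \<noteq> {}" using assms by (auto simp: Bi_def)
  thus ?thesis unfolding ktree_step_alt using finite_kcliques by simp
qed

lemma finite_set_step:
  assumes "Bi k t E"
  shows "finite (set_pmf (ktree_step k t E))"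
  using set_step[OF assms] finite_kcliques by simp

lemma reach:
  assumes k: "k \<ge> 2"
  shows "H \<in> set_pmf (ktree_evolve k 0 t (ktree_init k)) \<Longrightarrow> Bi k t H"
proof (induction t arbitrary: H)
  case 0 thus ?case using Bi_init[OF k] by simp
next
  case (Suc t)
  then obtain E where E: "E \<in> set_pmf (ktree_evolve k 0 t (ktree_init k))"
    and H: "H \<in> set_pmf (ktree_step k t E)" by auto
  have B: "Bi k t E" using Suc.IH E by simp
  then obtain S where S: "S \<in> kcliques k {..<k+t} E" and HS: "H = E \<union> newE (k+t) S"
    using H set_step by auto
  show ?case using step_facts(1)[OF k B S] HS by simp
qed

definition Xi :: "nat \<Rightarrow> nat \<Rightarrow> nat \<Rightarrow> nat set set \<Rightarrow> bool" where
  "Xi k t x E \<longleftrightarrow> Wx k t x E + k*(k-1) = (k-1)*degree E x + k \<and> k \<le> degree E x"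

lemma born:
  assumes k: "k \<ge> 2" and j: "j \<ge> 1" and H: "H \<in> set_pmf (ktree_process k j)"
  shows "Bi k j H \<and> Xi k j (k+j-1) H \<and> degree H (k+j-1) = k"
proof -
  obtain j' where j': "j = Suc j'" using j by (cases j) auto
  from H obtain E where E: "E \<in> set_pmf (ktree_evolve k 0 j' (ktree_init k))"
    and H': "H \<in> set_pmf (ktree_step k j' E)" by (auto simp: ktree_process_def j')
  have B: "Bi k j' E" using reach[OF k E] .
  then obtain S where S: "S \<in> kcliques k {..<k+j'} E" and HS: "H = E \<union> newE (k+j') S"
    using H' set_step by auto
  have x: "k + j - 1 = k + j'" using j' by simp
  show ?thesis using step_facts(1,4,5)[OF k B S] HS j' k
    by (simp add: Xi_def x algebra_simps)
qed

lemma evolve_inv: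
  assumes k: "k \<ge> 2" and B: "Bi k j H" and X: "Xi k j x H" and x: "x < k + j"
  shows "E \<in> set_pmf (ktree_evolve k j m H) \<Longrightarrow> Bi k (j+m) E \<and> Xi k (j+m) x E"
proof (induction m arbitrary: E)
  case 0 thus ?case using B X by simp
next
  case (Suc m)
  then obtain E0 where E0: "E0 \<in> set_pmf (ktree_evolve k j m H)"
    and E: "E \<in> set_pmf (ktree_step k (j+m) E0)" by auto
  have B0: "Bi k (j+m) E0" and X0: "Xi k (j+m) x E0" using Suc.IH E0 by auto
  then obtain S where S: "S \<in> kcliques k {..<k+(j+m)} E0" and HS: "E = E0 \<union> newE (k+(j+m)) S"
    using E set_step by auto
  have xl: "x < k + (j+m)" using x by simp
  have "Xi k (Suc (j+m)) x E"
  proof -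
    obtain k1 where k1: "k = Suc k1" using k by (cases k) auto
    show ?thesis
      using step_facts(2,3)[OF k B0 S xl] X0 HS
      by (cases "x \<in> S") (simp_all add: Xi_def k1 algebra_simps)
  qed
  thus ?case using step_facts(1)[OF k B0 S] HS by simp
qed

lemma finite_evolve:
  assumes k: "k \<ge> 2" and B: "Bi k j H" and X: "Xi k j x H" and x: "x < k + j"
  shows "finite (set_pmf (ktree_evolve k j m H))"
proof (induction m)
  case 0 thus ?case by simp
next
  case (Suc m)
  have "\<And>E. E \<in> set_pmf (ktree_evolve k j m H) \<Longrightarrow> finite (set_pmf (ktree_step k (j+m) E))"
    using evolve_inv[OF k B X x] finite_set_step by blast
  thus ?case using Suc.IH by simp
qed

definition rf :: "real \<Rightarrow> nat \<Rightarrow> real" where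
  "rf z r = (\<Prod>i<r. z + real i)"

lemma rf_Suc: "rf z (Suc r) = rf z r * (z + real r)"
  by (simp add: rf_def)

lemma rf_shift: "rf (z+1) r * z = rf z r * (z + real r)"
proof (induction r)
  case 0 thus ?case by (simp add: rf_def)
next
  case (Suc r)
  have "rf (z+1) (Suc r) * z = (rf (z+1) r * z) * (z+1+real r)" by (simp add: rf_Suc algebra_simps)
  also have "\<dots> = rf z r * (z + real r) * (z+1+real r)" using Suc.IH by simp
  also have "\<dots> = rf z (Suc r) * (z + real (Suc r))" by (simp add: rf_Suc algebra_simps)
  finally show ?case .
qed

definition Phi :: "nat \<Rightarrow> nat \<Rightarrow> nat \<Rightarrow> nat set set \<Rightarrow> real" where
  "Phi k q x E = rf (real (degree E x) - real k + real k / (real k - 1)) q"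

lemma step_expect:
  assumes k: "k \<ge> 2" and B: "Bi k t E" and X: "Xi k t x E" and x: "x < k + t"
  shows "measure_pmf.expectation (ktree_step k t E) (Phi k q x)
           = Phi k q x E * (1 + real q * (real k - 1) / (1 + real k * real t))"
proof -
  let ?C = "kcliques k {..<k+t} E"
  define Z where "Z = real (degree E x) - real k + real k / (real k - 1)"
  let ?W = "Wx k t x E"
  have C: "?C \<noteq> {}" "finite ?C" and cC: "card ?C = 1 + k*t"
    using B finite_kcliques by (auto simp: Bi_def)
  have ph: "Phi k q x (E \<union> newE (k+t) S) = (if x \<in> S then rf (Z + 1) q else rf Z q)"
    if "S \<in> ?C" for S
    using step_facts(3)[OF k B that x] by (auto simp: Phi_def Z_def algebra_simps)
  have "measure_pmf.expectation (ktree_step k t E) (Phi k q x)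
        = (\<Sum>S\<in>?C. Phi k q x (E \<union> newE (k+t) S)) / card ?C"
    unfolding ktree_step_alt using C by (simp add: integral_pmf_of_set)
  also have "(\<Sum>S\<in>?C. Phi k q x (E \<union> newE (k+t) S)) = (\<Sum>S\<in>?C. if x \<in> S then rf (Z + 1) q else rf Z q)"
    using ph by (rule sum.cong[OF refl])
  also have "\<dots> = real (card (?C \<inter> {S. x \<in> S})) * rf (Z + 1) q + real (card (?C \<inter> - {S. x \<in> S})) * rf Z q"
    using C by (simp add: sum.If_cases)
  also have "card (?C \<inter> {S. x \<in> S}) = ?W" unfolding Wx_def by (rule arg_cong[where f=card]) auto
  also have "card (?C \<inter> - {S. x \<in> S}) = card ?C - ?W"
  proof -
    have "?C \<inter> - {S. x \<in> S} = ?C - (?C \<inter> {S. x \<in> S})" by auto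
    moreover have "card (?C \<inter> {S. x \<in> S}) = ?W" unfolding Wx_def by (rule arg_cong[where f=card]) auto
    ultimately show ?thesis using C by (simp add: card_Diff_subset)
  qed
  finally have eq: "measure_pmf.expectation (ktree_step k t E) (Phi k q x) =
     (real ?W * rf (Z + 1) q + real (card ?C - ?W) * rf Z q) / real (card ?C)" .
  have WC: "?W \<le> card ?C" unfolding Wx_def using C by (intro card_mono) auto
  have k1: "real k - 1 > 0" using k by simp
  have Wr: "real ?W = (real k - 1) * Z"
  proof -
    have "real (?W + k*(k-1)) = real ((k-1) * degree E x + k)"
      using X unfolding Xi_def by simp
    hence h: "real ?W + real k * (real k - 1) = (real k - 1) * real (degree E x) + real k"
      using k by (simp add: of_nat_diff)
    have h2: "(real k - 1) * (real k / (real k - 1)) = real k" using k1 by simp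
    have "(real k - 1) * Z = (real k - 1) * (real (degree E x) - real k) + real k"
      using h2 unfolding Z_def by (simp add: algebra_simps)
    thus ?thesis using h by (simp add: algebra_simps)
  qed
  have hW: "real ?W * rf (Z + 1) q = (real k - 1) * (rf Z q * (Z + real q))"
    unfolding Wr using rf_shift[of Z q] by (metis mult.assoc mult.commute)
  have dW: "real (card ?C - ?W) = real (card ?C) - real ?W" using WC by (simp add: of_nat_diff)
  have num: "real ?W * rf (Z + 1) q + real (card ?C - ?W) * rf Z q
        = rf Z q * (real (card ?C) + (real k - 1) * real q)"
    unfolding hW dW by (simp add: Wr algebra_simps)
  have PZ: "Phi k q x E = rf Z q" by (simp add: Phi_def Z_def)
  have pos: "1 + real k * real t > 0" by (simp add: add_pos_nonneg)
  show ?thesis unfolding eq num PZ using cC pos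
    by (simp add: field_simps)
qed

lemma evolve_expect:
  assumes k: "k \<ge> 2" and B: "Bi k j H" and X: "Xi k j x H" and x: "x < k + j"
  shows "measure_pmf.expectation (ktree_evolve k j m H) (Phi k q x)
           = Phi k q x H * (\<Prod>i<m. 1 + real q * (real k - 1) / (1 + real k * real (j+i)))"
proof (induction m)
  case 0 thus ?case by simp
next
  case (Suc m)
  let ?A = "set_pmf (ktree_evolve k j m H)"
  let ?c = "1 + real q * (real k - 1) / (1 + real k * real (j+m))"
  have finA: "finite ?A" using finite_evolve[OF k B X x] .
  have "measure_pmf.expectation (ktree_evolve k j (Suc m) H) (Phi k q x)
      = (\<Sum>a\<in>?A. pmf (ktree_evolve k j m H) a *\<^sub>R measure_pmf.expectation (ktree_step k (j+m) a) (Phi k q x))"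
    by (simp only: ktree_evolve.simps, rule pmf_expectation_bind[OF finA])
       (use evolve_inv[OF k B X x] finite_set_step in auto)
  also have "\<dots> = (\<Sum>a\<in>?A. pmf (ktree_evolve k j m H) a *\<^sub>R (Phi k q x a * ?c))"
  proof (rule sum.cong[OF refl])
    fix a assume a: "a \<in> ?A"
    have "Bi k (j+m) a" "Xi k (j+m) x a" using evolve_inv[OF k B X x a] by auto
    thus "pmf (ktree_evolve k j m H) a *\<^sub>R measure_pmf.expectation (ktree_step k (j+m) a) (Phi k q x)
        = pmf (ktree_evolve k j m H) a *\<^sub>R (Phi k q x a * ?c)"
      using step_expect[OF k _ _, of "j+m" a x q] x by simp
  qed
  also have "\<dots> = ?c * (\<Sum>a\<in>?A. pmf (ktree_evolve k j m H) a *\<^sub>R Phi k q x a)"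
    by (simp only: sum_distrib_left real_scaleR_def mult_ac)
  also have "\<dots> = ?c * measure_pmf.expectation (ktree_evolve k j m H) (Phi k q x)"
    by (subst integral_measure_pmf[OF finA]) auto
  finally show ?case using Suc.IH by (simp add: algebra_simps)
qed

lemma ln_bern:
  fixes a y :: real
  assumes a: "a \<ge> 1" and y: "y \<ge> 0"
  shows "ln (1 + a*y) \<le> a * ln (1 + y)"
proof -
  let ?g = "\<lambda>z. a * ln (1 + z) - ln (1 + a*z)"
  have "?g 0 \<le> ?g y"
  proof (rule DERIV_nonneg_imp_nondecreasing[OF y])
    fix z :: real assume z: "0 \<le> z" "z \<le> y"
    have p1: "1 + z > 0" and p2: "1 + a*z > 0" using z a by (auto intro: add_pos_nonneg)
    have "DERIV ?g z :> a * (1 / (1+z)) - a / (1 + a*z)"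
      by (rule derivative_eq_intros refl | use p1 p2 in simp)+
    moreover have "a * (1 / (1+z)) - a / (1 + a*z) \<ge> 0"
    proof -
      have "1 + z \<le> 1 + a*z" using z a by (simp add: mult_right_mono[of 1 a z, simplified])
      hence "1 / (1 + a*z) \<le> 1 / (1+z)" using p1 by (simp add: frac_le)
      thus ?thesis using a by (simp add: divide_inverse mult_left_mono)
    qed
    ultimately show "\<exists>D. DERIV ?g z :> D \<and> 0 \<le> D" by blast
  qed
  thus ?thesis by simp
qed

lemma step_factor:
  fixes a t :: real
  assumes a: "a \<ge> 1" and t: "t > 0"
  shows "1 + a / t \<le> ((t+1)/t) powr a"
proof -
  have "(t+1)/t = 1 + 1/t" using t by (simp add: field_simps)
  moreover have "1 + 1/t > 0" using t by (simp add: add_pos_pos)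
  ultimately have "((t+1)/t) powr a = exp (a * ln (1 + 1/t))" by (simp add: powr_def)
  also have "\<dots> \<ge> exp (ln (1 + a * (1/t)))" using ln_bern[OF a, of "1/t"] t by simp
  also have "exp (ln (1 + a * (1/t))) = 1 + a/t" using t a by (simp add: add_pos_nonneg)
  finally show ?thesis .
qed

lemma prod_bound:
  assumes k: "k \<ge> 2" and q: "q \<ge> 2" and j: "j \<ge> 1"
  shows "(\<Prod>i<m. 1 + real q * (real k - 1) / (1 + real k * real (j+i)))
           \<le> (real (j+m) / real j) powr (real q * (real k - 1) / real k)"
proof (induction m)
  case 0 thus ?case using j by simp
next
  case (Suc m)
  let ?a = "real q * (real k - 1) / real k"
  have a1: "?a \<ge> 1"
  proof -
    have "real k \<le> 2 * (real k - 1)" using k by simp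
    also have "\<dots> \<le> real q * (real k - 1)" using q k by (intro mult_right_mono) auto
    finally show ?thesis using k by simp
  qed
  let ?t = "real (j+m)"
  have tpos: "?t > 0" using j by simp
  have f: "1 + real q * (real k - 1) / (1 + real k * ?t) \<le> ((?t+1)/?t) powr ?a"
  proof -
    have "real q * (real k - 1) / (1 + real k * ?t) \<le> real q * (real k - 1) / (real k * ?t)"
    proof -
      have "0 < (1 + real k * ?t) * (real k * ?t)" using k tpos by (intro mult_pos_pos add_pos_pos) auto
      thus ?thesis using k tpos by (intro divide_left_mono) auto
    qed
    also have "\<dots> = ?a / ?t" by simp
    finally show ?thesis using step_factor[OF a1 tpos] by simp
  qed
  have fpos: "0 \<le> 1 + real q * (real k - 1) / (1 + real k * ?t)" using k by simp
  have "(\<Prod>i<Suc m. 1 + real q * (real k - 1) / (1 + real k * real (j+i)))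
        = (\<Prod>i<m. 1 + real q * (real k - 1) / (1 + real k * real (j+i))) * (1 + real q * (real k - 1) / (1 + real k * ?t))"
    by simp
  also have "\<dots> \<le> (?t / real j) powr ?a * ((?t+1)/?t) powr ?a"
    using Suc.IH f fpos by (intro mult_mono) auto
  also have "\<dots> = (?t / real j * ((?t+1)/?t)) powr ?a" by (rule powr_mult[symmetric])
  also have "?t / real j * ((?t+1)/?t) = real (j + Suc m) / real j"
  proof -
    have jp: "real j > 0" using j by simp
    have gen: "T / J * ((T+1)/T) = (T+1)/J" if "T > 0" "J > 0" for T J :: real using that by (simp add: field_simps)
    show ?thesis using gen[OF tpos jp] by (simp add: add_ac)
  qed
  finally show ?case .
qed

lemma ln_lower: fixes x :: real assumes x: "x \<ge> 0" shows "2*x/(2+x) \<le> ln (1+x)"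
proof -
  let ?g = "\<lambda>z. ln (1 + z) - 2*z/(2+z)"
  have "?g 0 \<le> ?g x"
  proof (rule DERIV_nonneg_imp_nondecreasing[OF x])
    fix z :: real assume z: "0 \<le> z" "z \<le> x"
    have p1: "1 + z > 0" and p2: "2 + z > 0" using z by auto
    have "DERIV ?g z :> 1/(1+z) - (2*(2+z) - 2*z)/(2+z)^2"
      by (rule derivative_eq_intros refl | use p1 p2 in \<open>simp add: power2_eq_square\<close>)+
    moreover have "1/(1+z) - (2*(2+z) - 2*z)/(2+z)^2 = z^2/((1+z)*(2+z)^2)"
    proof -
      have "1/(1+z) - (2*(2+z) - 2*z)/(2+z)^2 = ((2+z)^2 - 4*(1+z))/((1+z)*(2+z)^2)"
        using p1 p2 by (simp add: field_simps)
      also have "(2+z)^2 - 4*(1+z) = z^2" by (simp add: power2_eq_square algebra_simps)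
      finally show ?thesis .
    qed
    moreover have "z^2/((1+z)*(2+z)^2) \<ge> 0" using p1 p2 by simp
    ultimately show "\<exists>D. DERIV ?g z :> D \<and> 0 \<le> D" by metis
  qed
  thus ?thesis by simp
qed

lemma fact_stirling:
  assumes "q \<ge> 1"
  shows "fact q * exp (real q) \<le> exp 1 * real q powr (real q + 1/2)"
  using assms
proof (induction q rule: dec_induct)
  case base thus ?case by simp
next
  case (step q)
  have q: "real q \<ge> 1" using step by simp
  have key: "exp 1 * real q powr (real q + 1/2) \<le> real (Suc q) powr (real q + 1/2)"
  proof -
    have "1 \<le> (real q + 1/2) * (2 * (1/real q) / (2 + 1/real q))" using q by (simp add: field_simps)
    also have "\<dots> \<le> (real q + 1/2) * ln (1 + 1/real q)" using ln_lower[of "1/real q"] q by (intro mult_left_mono) auto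
    also have "ln (1 + 1/real q) = ln (real q + 1) - ln (real q)"
    proof -
      have "1 + 1/real q = (real q+1)/real q" using q by (simp add: field_simps)
      thus ?thesis using ln_div[of "real q + 1" "real q"] q by simp
    qed
    finally have "1 + (real q + 1/2) * ln (real q) \<le> (real q + 1/2) * ln (real q + 1)" by (simp add: algebra_simps)
    hence "exp (1 + (real q + 1/2) * ln (real q)) \<le> exp ((real q + 1/2) * ln (real q + 1))" by simp
    thus ?thesis using q by (simp add: powr_def exp_add mult_ac add_ac)
  qed
  have "fact (Suc q) * exp (real (Suc q)) = (real q + 1) * exp 1 * (fact q * exp (real q))"
    by (simp add: exp_add[symmetric] algebra_simps)
  also have "\<dots> \<le> (real q + 1) * exp 1 * (exp 1 * real q powr (real q + 1/2))"
    using step.IH by (intro mult_left_mono) auto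
  also have "\<dots> \<le> (real q + 1) * exp 1 * real (Suc q) powr (real q + 1/2)"
    using key by (intro mult_left_mono) auto
  also have "\<dots> = exp 1 * real (Suc q) powr (real (Suc q) + 1/2)"
  proof -
    have "real (Suc q) powr (1 + (real q + 1/2)) = real (Suc q) powr 1 * real (Suc q) powr (real q + 1/2)"
      by (rule powr_add)
    hence "real (Suc q) powr (real (Suc q) + 1/2) = (real q + 1) * real (Suc q) powr (real q + 1/2)"
      by (simp add: add_ac)
    thus ?thesis by simp
  qed
  finally show ?case .
qed

lemma rf_nonneg: "z \<ge> 0 \<Longrightarrow> rf z r \<ge> 0"
  by (simp add: rf_def prod_nonneg)

lemma rf_ge_pow: assumes "z \<ge> 0" shows "z ^ r \<le> rf z r"
proof -
  have "z ^ r = (\<Prod>i<r. z)" by simp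
  also have "\<dots> \<le> rf z r" unfolding rf_def using assms by (intro prod_mono) auto
  finally show ?thesis .
qed

lemma rf_mono: assumes "0 \<le> z" "z \<le> w" shows "rf z r \<le> rf w r"
  unfolding rf_def using assms by (intro prod_mono) auto

lemma rf_two: "rf 2 q = fact (Suc q)"
  by (induction q) (simp_all add: rf_Suc rf_def[of _ 0] algebra_simps)

lemma final_bound:
  assumes q: "q \<ge> 1"
  shows "fact (Suc q) / real q ^ q \<le> 2 * exp 1 * real q * sqrt (real q) * exp (- real q)"
proof -
  have qp: "real q > 0" using q by simp
  have pw: "real q powr (real q + 1/2) = real q ^ q * sqrt (real q)"
    using qp by (simp add: powr_add powr_realpow powr_half_sqrt)
  have f: "fact q \<le> exp 1 * (real q ^ q * sqrt (real q)) * exp (- real q)"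
    using fact_stirling[OF q] unfolding pw by (simp add: exp_minus field_simps)
  have "fact (Suc q) = (real q + 1) * fact q" by simp
  also have "\<dots> \<le> (2 * real q) * (exp 1 * (real q ^ q * sqrt (real q)) * exp (- real q))"
    using f q by (intro mult_mono) auto
  finally have "fact (Suc q) \<le> real q ^ q * (2 * exp 1 * real q * sqrt (real q) * exp (- real q))"
    by (simp add: mult_ac)
  thus ?thesis using qp by (simp add: divide_le_eq mult_ac)
qed

theorem lemma1:
  fixes k :: nat
  assumes "k \<ge> 2"
  shows "\<exists>C > (0::real). \<forall>j n q :: nat. 1 \<le> j \<longrightarrow> j \<le> n \<longrightarrow> 1 \<le> q \<longrightarrow>
           (\<forall>H \<in> set_pmf (ktree_process k j).
              measure_pmf.prob (ktree_evolve k j (n - j) H)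
                {E. real (degree E (k + j - 1)) >
                      real k + real q * (real n / real j) powr ((real k - 1) / real k)}
              \<le> C * real q * sqrt (real q) * exp (- real q))"
proof (intro exI[of _ "2 * exp 1"] conjI allI impI ballI)
  show "(0::real) < 2 * exp 1" by simp
next
  fix j n q :: nat and H
  assume j: "1 \<le> j" and jn: "j \<le> n" and q: "1 \<le> q" and H: "H \<in> set_pmf (ktree_process k j)"
  have k: "k \<ge> 2" using assms .
  define x where "x = k + j - 1"
  have BX: "Bi k j H" "Xi k j x H" and dH: "degree H x = k" using born[OF k j H] by (auto simp: x_def)
  have xl: "x < k + j" using j by (simp add: x_def)
  define M where "M = ktree_evolve k j (n - j) H"
  define A where "A = (real n / real j) powr ((real k - 1) / real k)"
  have Apos: "A > 0" using j jn unfolding A_def by simp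
  define ev where "ev = {E. real (degree E x) > real k + real q * A}"
  show "measure_pmf.prob (ktree_evolve k j (n - j) H)
          {E. real (degree E (k + j - 1)) > real k + real q * (real n / real j) powr ((real k - 1) / real k)}
        \<le> 2 * exp 1 * real q * sqrt (real q) * exp (- real q)"
  proof (cases "q = 1")
    case True
    have "measure_pmf.prob (ktree_evolve k j (n - j) H)
          {E. real (degree E (k + j - 1)) > real k + real q * (real n / real j) powr ((real k - 1) / real k)} \<le> 1"
      by simp
    also have "1 \<le> 2 * exp 1 * real q * sqrt (real q) * exp (- real q)"
      using True by (simp add: exp_minus mult.assoc)
    finally show ?thesis .
  next
    case False
    hence q2: "q \<ge> 2" using q by simp
    let ?s = "real k / (real k - 1)"
    have k1: "real k - 1 > 0" using k by simp
    have spos: "?s > 0" using k1 k by simp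
    have s2: "?s \<le> 2" using k1 k by (simp add: divide_le_eq)
    have fin: "finite (set_pmf M)" unfolding M_def using finite_evolve[OF k BX xl] .
    have supp: "E \<in> set_pmf M \<Longrightarrow> k \<le> degree E x" for E
      using evolve_inv[OF k BX xl, of E "n - j"] by (simp add: M_def Xi_def)
    let ?c = "(real q * A) ^ q"
    have pt: "?c * indicator ev E \<le> Phi k q x E" if E: "E \<in> set_pmf M" for E
    proof -
      have d: "real k \<le> real (degree E x)" using supp[OF E] by simp
      define Z where "Z = real (degree E x) - real k + ?s"
      have Zpos: "Z \<ge> 0" using d spos by (simp add: Z_def)
      have PZ: "Phi k q x E = rf Z q" by (simp add: Phi_def Z_def)
      show ?thesis
      proof (cases "E \<in> ev")
        case True
        hence "real q * A \<le> Z" using spos by (simp add: ev_def Z_def)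
        hence "?c \<le> Z ^ q" using Apos by (intro power_mono) auto
        also have "\<dots> \<le> rf Z q" using rf_ge_pow[OF Zpos] .
        finally show ?thesis using True PZ by simp
      next
        case False thus ?thesis using PZ rf_nonneg[OF Zpos] by simp
      qed
    qed
    have "?c * measure_pmf.prob M ev = measure_pmf.expectation M (\<lambda>E. ?c * indicator ev E)"
      by simp
    also have "\<dots> \<le> measure_pmf.expectation M (Phi k q x)"
      using fin pt by (intro integral_mono_AE integrable_measure_pmf_finite AE_pmfI) auto
    also have "\<dots> = Phi k q x H * (\<Prod>i<n-j. 1 + real q * (real k - 1) / (1 + real k * real (j+i)))"
      unfolding M_def by (rule evolve_expect[OF k BX xl])
    also have "\<dots> \<le> fact (Suc q) * A ^ q"
    proof -
      have PH: "Phi k q x H = rf ?s q" using dH by (simp add: Phi_def)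
      have i1: "Phi k q x H \<le> fact (Suc q)" unfolding PH rf_two[symmetric]
        using spos s2 by (intro rf_mono) auto
      have i2: "(\<Prod>i<n-j. 1 + real q * (real k - 1) / (1 + real k * real (j+i))) \<le> A ^ q"
      proof -
        have "(\<Prod>i<n-j. 1 + real q * (real k - 1) / (1 + real k * real (j+i)))
              \<le> (real (j + (n-j)) / real j) powr (real q * (real k - 1) / real k)"
          by (rule prod_bound[OF k q2 j])
        also have "\<dots> = A ^ q"
        proof -
          have "A ^ q = A powr real q" using Apos by (simp add: powr_realpow)
          also have "\<dots> = (real n / real j) powr ((real k - 1) / real k * real q)"
            unfolding A_def by (simp add: powr_powr)
          finally show ?thesis using jn by (simp add: mult_ac)
        qed
        finally show ?thesis .
      qed
      have i3: "0 \<le> (\<Prod>i<n-j. 1 + real q * (real k - 1) / (1 + real k * real (j+i)))"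
        using k by (intro prod_nonneg) simp
      have i4: "0 \<le> (fact (Suc q) :: real)" by (rule fact_ge_zero)
      show ?thesis by (rule mult_mono[OF i1 i2 i4 i3])
    qed
    finally have main: "?c * measure_pmf.prob M ev \<le> fact (Suc q) * A ^ q" .
    have cpos: "?c > 0" using Apos q by simp
    have "measure_pmf.prob M ev \<le> fact (Suc q) * A ^ q / ?c"
      using main cpos by (simp add: le_divide_eq mult_ac)
    also have "fact (Suc q) * A ^ q / ?c = fact (Suc q) / real q ^ q"
      using Apos by (simp add: power_mult_distrib)
    also have "\<dots> \<le> 2 * exp 1 * real q * sqrt (real q) * exp (- real q)"
      by (rule final_bound[OF q])
    finally show ?thesis unfolding M_def ev_def A_def x_def .
  qed
qed

end
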